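(* Let $X$ be a locally convex Hausdorff space, $K\subset X$ a convex compact subset, $T:\mathscr{C}(K)\to\mathscr{C}(K)$ a Markov operator such that $T(h)=h$ for every $h\in A(K)$, $a\ge0$, and $(\mu_n)_{n\ge1}$ a sequence of Borel probability measures on $K$. Then for every $n\ge1$ and $f\in\mathscr{C}(K)$, $$\|C_n(f)-f\|_\infty\le 2\,\Omega\Big(f,\sqrt{\tfrac{4a^2+1}{n+a}}\Big).$$
   Context: $A(K)$ is the space of continuous affine functions on $K$. A Markov operator is a positive linear operator $T$ on $\mathscr{C}(K)$ with $T(\mathbf{1})=\mathbf{1}$; $(\tilde\mu_x^T)_{x\in K}$ are the Borel probability measures with $\int_K f\,d\tilde\mu_x^T=T(f)(x)$. $C_n(f)(x)=\int_K\cdots\int_K f\big(\frac{x_1+\dots+x_n+a x_{n+1}}{n+a}\big)\,d\tilde\mu_x^T(x_1)\cdots d\tilde\mu_x^T(x_n)\,d\mu_n(x_{n+1})$. $L(K)=\{\varphi|_K:\varphi\in X'\}$ ($X'$ the dual of $X$). For $m\ge1$, $h_1,\dots,h_m\in L(K)$, $\delta>0$, let $H(h_1,\dots,h_m,\delta)=\{(x,y)\in K\times K:\sum_{j=1}^m(h_j(x)-h_j(y))^2\le\delta^2\}$ and, for bounded $f:K\to\mathbf{R}$, $\omega(f;h_1,\dots,h_m,\delta)=\sup\{|f(x)-f(y)|:(x,y)\in H(h_1,\dots,h_m,\delta)\}$. The total modulus of continuity is $$\Omega(f,\delta)=\inf\Big\{\omega(f;h_1,\dots,h_m,\delta): m\ge1,\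 h_1,\dots,h_m\in L(K),\ \Big\|\sum_{j=1}^m h_j^2\Big\|_\infty=1\Big\}.$$ *)

theory Defs
  imports "HOL-Probability.Probability"
begin

text \<open>A real topological vector space that is Hausdorff, with (jointly) continuous
  addition and scalar multiplication (stated via neighbourhoods, i.e. continuity
  w.r.t. the product topology), and a base of convex open sets.\<close>
class lc_tvs = real_vector + t2_space +
  assumes continuous_add_lc: "open U \<Longrightarrow> x + y \<in> U \<Longrightarrow>
     \<exists>A B. open A \<and> open B \<and> x \<in> A \<and> y \<in> B \<and> (\<forall>u\<in>A. \<forall>v\<in>B. u + v \<in> U)"
  assumes continuous_scaleR_lc: "open U \<Longrightarrow> c *\<^sub>R x \<in> U \<Longrightarrow>
     \<exists>e>0. \<exists>B. open B \<and> x \<in> B \<and> (\<forall>d. \<bar>d - c\<bar> < e \<longrightarrow> (\<forall>v\<in>B. d *\<^sub>R v \<in> U))"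
  assumes convex_open_base: "open U \<Longrightarrow> x \<in> U \<Longrightarrow> \<exists>V. open V \<and> (\<forall>u\<in>V. \<forall>v\<in>V. \<forall>t::real. 0 \<le> t \<and> t \<le> 1 \<longrightarrow> (1 - t) *\<^sub>R u + t *\<^sub>R v \<in> V) \<and> x \<in> V \<and> V \<subseteq> U"

definition dual_space :: "('a::lc_tvs \<Rightarrow> real) set" where
  "dual_space = {\<phi>. linear \<phi> \<and> continuous_on UNIV \<phi>}"

definition Lfun :: "'a::lc_tvs set \<Rightarrow> ('a \<Rightarrow> real) set" where
  "Lfun K = {h. \<exists>\<phi>\<in>dual_space. \<forall>x\<in>K. h x = \<phi> x}"

definition affine_cont :: "'a::{real_vector,topological_space} set \<Rightarrow> ('a \<Rightarrow> real) \<Rightarrow> bool" where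
  "affine_cont K h \<longleftrightarrow> continuous_on K h \<and>
     (\<forall>x\<in>K. \<forall>y\<in>K. \<forall>t::real. 0 \<le> t \<and> t \<le> 1 \<longrightarrow>
        h (t *\<^sub>R x + (1 - t) *\<^sub>R y) = t * h x + (1 - t) * h y)"

text \<open>Markov operator on C(K) (functions are identified when they agree on K).\<close>
definition markov_operator :: "'a::topological_space set \<Rightarrow> (('a \<Rightarrow> real) \<Rightarrow> ('a \<Rightarrow> real)) \<Rightarrow> bool" where
  "markov_operator K T \<longleftrightarrow>
     (\<forall>f. continuous_on K f \<longrightarrow> continuous_on K (T f)) \<and>
     (\<forall>f g. continuous_on K f \<longrightarrow> (\<forall>x\<in>K. f x = g x) \<longrightarrow> (\<forall>x\<in>K. T f x = T g x)) \<and>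
     (\<forall>f g. continuous_on K f \<longrightarrow> continuous_on K g \<longrightarrow>
        (\<forall>x\<in>K. T (\<lambda>y. f y + g y) x = T f x + T g x)) \<and>
     (\<forall>c f. continuous_on K f \<longrightarrow> (\<forall>x\<in>K. T (\<lambda>y. c * f y) x = c * T f x)) \<and>
     (\<forall>f. continuous_on K f \<longrightarrow> (\<forall>x\<in>K. 0 \<le> f x) \<longrightarrow> (\<forall>x\<in>K. 0 \<le> T f x)) \<and>
     (\<forall>x\<in>K. T (\<lambda>_. 1) x = 1)"

definition borel_prob_on :: "'a::topological_space set \<Rightarrow> 'a measure \<Rightarrow> bool" where
  "borel_prob_on K M \<longleftrightarrow> prob_space M \<and> sets M = sets (restrict_space borel K)"

text \<open>Iterated integral: iter_int M n g = \<integral>...\<integral> g(x_1+...+x_n) dM(x_1)...dM(x_n).\<close>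
primrec iter_int :: "'a::real_vector measure \<Rightarrow> nat \<Rightarrow> ('a \<Rightarrow> real) \<Rightarrow> real" where
  "iter_int M 0 g = g 0"
| "iter_int M (Suc k) g = (\<integral>y. iter_int M k (\<lambda>s. g (y + s)) \<partial>M)"

text \<open>The operator C_n, with muT x the representing measure of T at x and mun = \<mu>_n.\<close>
definition Cop :: "('a::real_vector \<Rightarrow> 'a measure) \<Rightarrow> 'a measure \<Rightarrow> real \<Rightarrow> nat \<Rightarrow> ('a \<Rightarrow> real) \<Rightarrow> 'a \<Rightarrow> real" where
  "Cop muT mun a n f x =
     (\<integral>z. iter_int (muT x) n (\<lambda>s. f ((1 / (real n + a)) *\<^sub>R (s + a *\<^sub>R z))) \<partial>mun)"

text \<open>Sup norm on K (extended-real valued; sup over the empty set is -\<infinity>).\<close>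
definition sup_norm_on :: "'a set \<Rightarrow> ('a \<Rightarrow> real) \<Rightarrow> ereal" where
  "sup_norm_on K g = (SUP x\<in>K. ereal \<bar>g x\<bar>)"

definition Hset :: "'a set \<Rightarrow> (nat \<Rightarrow> 'a \<Rightarrow> real) \<Rightarrow> nat \<Rightarrow> real \<Rightarrow> ('a \<times> 'a) set" where
  "Hset K h m \<delta> = {(x, y). x \<in> K \<and> y \<in> K \<and> (\<Sum>j<m. (h j x - h j y)\<^sup>2) \<le> \<delta>\<^sup>2}"

definition omega_mod :: "'a set \<Rightarrow> ('a \<Rightarrow> real) \<Rightarrow> (nat \<Rightarrow> 'a \<Rightarrow> real) \<Rightarrow> nat \<Rightarrow> real \<Rightarrow> ereal" where
  "omega_mod K f h m \<delta> = (SUP p\<in>Hset K h m \<delta>. ereal \<bar>f (fst p) - f (snd p)\<bar>)"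

text \<open>Total modulus of continuity (infimum over the empty set is +\<infinity>).\<close>
definition Omega :: "'a::lc_tvs set \<Rightarrow> ('a \<Rightarrow> real) \<Rightarrow> real \<Rightarrow> ereal" where
  "Omega K f \<delta> = (INF mh\<in>{(m, h). 1 \<le> m \<and> (\<forall>j<m. h j \<in> Lfun K) \<and>
                       sup_norm_on K (\<lambda>x. \<Sum>j<m. (h j x)\<^sup>2) = 1}.
                   omega_mod K f (snd mh) (fst mh) \<delta>)"

end

theory Submission
  imports Defs
begin


lemma space_bp:
  assumes "sets M = sets (restrict_space borel K)"
  shows "space M = K"
  using sets_eq_imp_space_eq[OF assms] by (simp add: space_restrict_space)

lemma cont_integrable:
  fixes g :: "'a::topological_space \<Rightarrow> real"
  assumes "continuous_on K g" "compact K" "prob_space M" "sets M = sets (restrict_space borel K)"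
  shows "integrable M g"
proof -
  have sp: "space M = K" using space_bp[OF assms(4)] .
  have meas: "g \<in> borel_measurable M"
    using measurable_cong_sets[OF assms(4) refl] borel_measurable_continuous_on_restrict[OF assms(1)]
    by blast
  have "compact (g ` K)" using compact_continuous_image[OF assms(1,2)] .
  then obtain B where B: "\<forall>y\<in>g ` K. norm y \<le> B" using compact_imp_bounded bounded_iff by metis
  have "AE x in M. norm (g x) \<le> B" using B sp by (intro AE_I2) auto
  moreover have "finite_measure M" using assms(3) prob_space_def by blast
  ultimately show ?thesis using finite_measure.integrable_const_bound meas by blast
qed


lemma add_cont: "continuous_on UNIV (\<lambda>p::'a::lc_tvs \<times> 'a. fst p + snd p)"
  unfolding continuous_on_open_vimage[OF open_UNIV]
proof (intro allI impI)
  fix U :: "'a set" assume U: "open U"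
  show "open ((\<lambda>p. fst p + snd p) -` U \<inter> UNIV)"
  proof (rule open_prod_intro)
    fix x assume "x \<in> (\<lambda>p::'a\<times>'a. fst p + snd p) -` U \<inter> UNIV"
    then have "fst x + snd x \<in> U" by auto
    from continuous_add_lc[OF U this] obtain A B where "open A" "open B" "fst x \<in> A" "snd x \<in> B"
      "\<forall>u\<in>A. \<forall>v\<in>B. u + v \<in> U" by blast
    then show "\<exists>A B. open A \<and> open B \<and> x \<in> A \<times> B \<and> A \<times> B \<subseteq> (\<lambda>p. fst p + snd p) -` U \<inter> UNIV"
      by (intro exI[of _ A] exI[of _ B]) (auto simp: mem_Times_iff)
  qed
qed

lemma scale_cont: "continuous_on UNIV (\<lambda>x::'a::lc_tvs. c *\<^sub>R x)"
  unfolding continuous_on_open_vimage[OF open_UNIV]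
proof (intro allI impI)
  fix U :: "'a set" assume U: "open U"
  show "open ((\<lambda>x. c *\<^sub>R x) -` U \<inter> UNIV)"
  proof (subst open_subopen, intro ballI)
    fix x assume "x \<in> (\<lambda>x. c *\<^sub>R x) -` U \<inter> UNIV"
    then have "c *\<^sub>R x \<in> U" by auto
    from continuous_scaleR_lc[OF U this] obtain e B where "e > 0" "open B" "x \<in> B"
      "\<forall>d. \<bar>d - c\<bar> < e \<longrightarrow> (\<forall>v\<in>B. d *\<^sub>R v \<in> U)" by blast
    then show "\<exists>T. open T \<and> x \<in> T \<and> T \<subseteq> (\<lambda>x. c *\<^sub>R x) -` U \<inter> UNIV"
      by (intro exI[of _ B]) auto
  qed
qed

lemma add_cont_on:
  fixes f g :: "'b::topological_space \<Rightarrow> 'a::lc_tvs"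
  assumes "continuous_on S f" "continuous_on S g"
  shows "continuous_on S (\<lambda>x. f x + g x)"
  using continuous_on_compose2[OF add_cont continuous_on_Pair[OF assms]] by simp

lemma scale_cont_on:
  fixes f :: "'b::topological_space \<Rightarrow> 'a::lc_tvs"
  assumes "continuous_on S f"
  shows "continuous_on S (\<lambda>x. c *\<^sub>R f x)"
  using continuous_on_compose2[OF scale_cont assms] by simp



lemma abs_int_le:
  fixes g :: "'b \<Rightarrow> real"
  assumes "prob_space M" "integrable M g" "\<And>t. t \<in> space M \<Longrightarrow> \<bar>g t\<bar> \<le> c"
  shows "\<bar>\<integral>t. g t \<partial>M\<bar> \<le> c"
proof -
  interpret prob_space M by fact
  have "\<bar>\<integral>t. g t \<partial>M\<bar> \<le> (\<integral>t. \<bar>g t\<bar> \<partial>M)" using integral_abs_bound .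
  also have "\<dots> \<le> (\<integral>t. c \<partial>M)"
    using assms by (intro integral_mono) auto
  also have "\<dots> = c" by (simp add: prob_space)
  finally show ?thesis .
qed

lemma param_cont:
  fixes H :: "'a::topological_space \<Rightarrow> 'b::topological_space \<Rightarrow> real"
  assumes Hc: "continuous_on (A \<times> K) (\<lambda>p. H (fst p) (snd p))" and K: "compact K"
    and M: "prob_space M" "sets M = sets (restrict_space borel K)"
  shows "continuous_on A (\<lambda>y. \<integral>t. H y t \<partial>M)"
proof -
  have sp: "space M = K" using space_bp[OF M(2)] .
  have int: "integrable M (H y)" if "y \<in> A" for y
  proof -
    have "continuous_on K (\<lambda>t. (y, t))" by (intro continuous_intros)
    moreover have "(\<lambda>t. (y, t)) ` K \<subseteq> A \<times> K" using that by auto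
    ultimately have "continuous_on K (\<lambda>t. H (fst (y,t)) (snd (y,t)))"
      using continuous_on_compose2[OF Hc] by blast
    then show ?thesis using cont_integrable[OF _ K M] by simp
  qed
  show ?thesis
    unfolding continuous_on_def
  proof (intro ballI tendstoI)
    fix y e assume y: "y \<in> A" and e: "(e::real) > 0"
    have "\<forall>t\<in>K. \<exists>U V. open U \<and> open V \<and> y \<in> U \<and> t \<in> V \<and>
       (\<forall>p\<in>A \<times> K. p \<in> U \<times> V \<longrightarrow> \<bar>H (fst p) (snd p) - H y t\<bar> < e/3)"
    proof
      fix t assume t: "t \<in> K"
      have "open (ball (H y t) (e/3))" "H (fst (y,t)) (snd (y,t)) \<in> ball (H y t) (e/3)"
        using e by auto
      then obtain W where W: "open W" "(y,t) \<in> W"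
        "\<forall>p\<in>A \<times> K. p \<in> W \<longrightarrow> H (fst p) (snd p) \<in> ball (H y t) (e/3)"
        using Hc[unfolded continuous_on_topological] y t by (metis mem_Times_iff fst_conv snd_conv)
      from open_prod_elim[OF W(1,2)] obtain U V where "open U" "open V" "(y,t) \<in> U \<times> V" "U \<times> V \<subseteq> W"
        by blast
      then show "\<exists>U V. open U \<and> open V \<and> y \<in> U \<and> t \<in> V \<and>
       (\<forall>p\<in>A \<times> K. p \<in> U \<times> V \<longrightarrow> \<bar>H (fst p) (snd p) - H y t\<bar> < e/3)"
        using W(3) by (intro exI[of _ U] exI[of _ V]) (auto simp: dist_real_def abs_minus_commute)
    qed
    then obtain U V where UV: "\<forall>t\<in>K. open (U t) \<and> open (V t) \<and> y \<in> U t \<and> t \<in> V t \<and>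
       (\<forall>p\<in>A \<times> K. p \<in> U t \<times> V t \<longrightarrow> \<bar>H (fst p) (snd p) - H y t\<bar> < e/3)"
      by metis
    obtain D where D: "D \<subseteq> K" "finite D" "K \<subseteq> \<Union> (V ` D)"
      using compactE_image[OF K, of K V] UV by blast
    define U0 where "U0 = \<Inter> (U ` D)"
    have "open U0" unfolding U0_def using D UV by (intro open_INT) auto
    moreover have "y \<in> U0" unfolding U0_def using D UV by auto
    moreover have "dist (\<integral>t. H y' t \<partial>M) (\<integral>t. H y t \<partial>M) < e" if y': "y' \<in> U0" "y' \<in> A" for y'
    proof -
      have b: "\<bar>H y' t' - H y t'\<bar> \<le> 2*e/3" if t': "t' \<in> K" for t'
      proof -
        obtain t where t: "t \<in> D" "t' \<in> V t" using D t' by auto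
        have "t \<in> K" using t D by auto
        have "y' \<in> U t" using y' t unfolding U0_def by auto
        have 1: "\<bar>H y' t' - H y t\<bar> < e/3" using UV \<open>t \<in> K\<close> \<open>y' \<in> U t\<close> t y' t' by auto
        have 2: "\<bar>H y t' - H y t\<bar> < e/3" using UV \<open>t \<in> K\<close> t y t' by auto
        show ?thesis using 1 2 by linarith
      qed
      have "\<bar>\<integral>t. H y' t - H y t \<partial>M\<bar> \<le> 2*e/3"
        using b int[OF y(1)] int[OF y'(2)] sp by (intro abs_int_le[OF M(1)]) auto
      then have "\<bar>(\<integral>t. H y' t \<partial>M) - (\<integral>t. H y t \<partial>M)\<bar> \<le> 2*e/3"
        using int[OF y(1)] int[OF y'(2)] by simp
      then show ?thesis using e by (simp add: dist_real_def)
    qed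
    ultimately show "\<forall>\<^sub>F y' in at y within A. dist (\<integral>t. H y' t \<partial>M) (\<integral>t. H y t \<partial>M) < e"
      unfolding eventually_at_topological by blast
  qed
qed



definition msum :: "'a::real_vector set \<Rightarrow> 'a set \<Rightarrow> 'a set" where
  "msum A B = {x + y | x y. x \<in> A \<and> y \<in> B}"

primrec Ssum :: "'a::real_vector set \<Rightarrow> nat \<Rightarrow> 'a set" where
  "Ssum K 0 = {0}"
| "Ssum K (Suc k) = msum K (Ssum K k)"

lemma msum_assoc: "msum (msum A B) C = msum A (msum B C)"
  unfolding msum_def by (auto simp: add.assoc) (metis add.assoc)+

lemma msum_zero[simp]: "msum A {0} = A"
  unfolding msum_def by auto

lemma iter_cont:
  fixes M :: "'a::lc_tvs measure"
  assumes K: "compact K" and M: "prob_space M" "sets M = sets (restrict_space borel K)"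
  shows "\<forall>A (g::'a \<Rightarrow> real). continuous_on (msum A (Ssum K k)) g \<longrightarrow>
           continuous_on A (\<lambda>y. iter_int M k (\<lambda>s. g (y + s)))"
proof (induction k)
  case 0
  then show ?case by simp
next
  case (Suc k)
  show ?case
  proof (intro allI impI)
    fix A and g :: "'a \<Rightarrow> real" assume g: "continuous_on (msum A (Ssum K (Suc k))) g"
    define F where "F w = iter_int M k (\<lambda>s. g (w + s))" for w
    have "continuous_on (msum (msum A K) (Ssum K k)) g" using g by (simp add: msum_assoc)
    then have Fc: "continuous_on (msum A K) F" using Suc unfolding F_def by blast
    have "continuous_on (A \<times> K) (\<lambda>p. fst p + snd p)"
      by (intro add_cont_on continuous_intros)
    moreover have "(\<lambda>p. fst p + snd p) ` (A \<times> K) \<subseteq> msum A K" unfolding msum_def by force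
    ultimately have "continuous_on (A \<times> K) (\<lambda>p. F (fst p + snd p))"
      using continuous_on_compose2[OF Fc] by blast
    then have "continuous_on A (\<lambda>y. \<integral>t. F (y + t) \<partial>M)"
      using param_cont[OF _ K M, of A "\<lambda>y t. F (y + t)"] by simp
    moreover have "iter_int M (Suc k) (\<lambda>s. g (y + s)) = (\<integral>t. F (y + t) \<partial>M)" for y
      by (simp add: F_def add.assoc)
    ultimately show "continuous_on A (\<lambda>y. iter_int M (Suc k) (\<lambda>s. g (y + s)))" by simp
  qed
qed

lemma iter_cont0:
  fixes M :: "'a::lc_tvs measure"
  assumes K: "compact K" and M: "prob_space M" "sets M = sets (restrict_space borel K)"
    and g: "continuous_on (Ssum K (Suc k)) g"
  shows "continuous_on K (\<lambda>t. iter_int M k (\<lambda>s. g (t + s)))"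
  using iter_cont[OF K M, of k] g by simp

lemma shift_cont:
  fixes F :: "'a::lc_tvs \<Rightarrow> real"
  assumes "continuous_on (msum {t} S) F"
  shows "continuous_on S (\<lambda>s. F (t + s))"
proof -
  have "continuous_on S (\<lambda>s. t + s)" by (intro add_cont_on continuous_intros)
  moreover have "(\<lambda>s. t + s) ` S \<subseteq> msum {t} S" unfolding msum_def by force
  ultimately show ?thesis using continuous_on_compose2[OF assms] by blast
qed

lemma iter_mono:
  fixes M :: "'a::lc_tvs measure"
  assumes K: "compact K" and M: "prob_space M" "sets M = sets (restrict_space borel K)"
  shows "\<forall>F G. continuous_on (Ssum K k) F \<longrightarrow> continuous_on (Ssum K k) G \<longrightarrow>
     (\<forall>s\<in>Ssum K k. \<bar>F s - c\<bar> \<le> G s) \<longrightarrow> \<bar>iter_int M k F - c\<bar> \<le> iter_int M k G"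
proof (induction k)
  case 0
  then show ?case by simp
next
  case (Suc k)
  show ?case
  proof (intro allI impI)
    fix F G assume Fc: "continuous_on (Ssum K (Suc k)) F" and Gc: "continuous_on (Ssum K (Suc k)) G"
      and b: "\<forall>s\<in>Ssum K (Suc k). \<bar>F s - c\<bar> \<le> G s"
    have sp: "space M = K" using space_bp[OF M(2)] .
    define IF where "IF t = iter_int M k (\<lambda>s. F (t + s))" for t
    define IG where "IG t = iter_int M k (\<lambda>s. G (t + s))" for t
    have iF: "integrable M IF" unfolding IF_def
      by (rule cont_integrable[OF iter_cont0[OF K M Fc] K M])
    have iG: "integrable M IG" unfolding IG_def
      by (rule cont_integrable[OF iter_cont0[OF K M Gc] K M])
    have pt: "\<bar>IF t - c\<bar> \<le> IG t" if t: "t \<in> K" for t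
    proof -
      have sub: "msum {t} (Ssum K k) \<subseteq> Ssum K (Suc k)" using t by (auto simp: msum_def)
      have "continuous_on (Ssum K k) (\<lambda>s. F (t + s))"
        by (rule shift_cont, rule continuous_on_subset[OF Fc sub])
      moreover have "continuous_on (Ssum K k) (\<lambda>s. G (t + s))"
        by (rule shift_cont, rule continuous_on_subset[OF Gc sub])
      moreover have "\<forall>s\<in>Ssum K k. \<bar>F (t + s) - c\<bar> \<le> G (t + s)"
      proof
        fix s assume "s \<in> Ssum K k"
        then have "t + s \<in> Ssum K (Suc k)" using t by (auto simp: msum_def)
        then show "\<bar>F (t + s) - c\<bar> \<le> G (t + s)" using b by blast
      qed
      ultimately show ?thesis using Suc unfolding IF_def IG_def by blast
    qed
    interpret prob_space M by fact
    have "\<bar>(\<integral>t. IF t \<partial>M) - c\<bar> = \<bar>\<integral>t. IF t - c \<partial>M\<bar>"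
      using iF by (simp add: prob_space)
    also have "\<dots> \<le> (\<integral>t. \<bar>IF t - c\<bar> \<partial>M)" by (rule integral_abs_bound)
    also have "\<dots> \<le> (\<integral>t. IG t \<partial>M)"
      using iF iG pt sp by (intro integral_mono) auto
    finally show "\<bar>iter_int M (Suc k) F - c\<bar> \<le> iter_int M (Suc k) G"
      by (simp add: IF_def IG_def)
  qed
qed

lemma Ssum_comb:
  fixes K :: "'a::real_vector set"
  assumes "convex K"
  shows "s \<in> Ssum K k \<Longrightarrow> z \<in> K \<Longrightarrow> 0 \<le> c \<Longrightarrow> real k + c > 0 \<Longrightarrow>
    (1 / (real k + c)) *\<^sub>R (s + c *\<^sub>R z) \<in> K"
proof (induction k arbitrary: s)
  case 0
  then show ?case by simp
next
  case (Suc k)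
  then obtain t s' where ts: "t \<in> K" "s' \<in> Ssum K k" "s = t + s'" by (auto simp: msum_def)
  show ?case
  proof (cases "real k + c = 0")
    case True
    then have "k = 0" "c = 0" using Suc.prems by auto
    then show ?thesis using ts by simp
  next
    case False
    then have kc: "real k + c > 0" using Suc.prems by auto
    have w: "(1 / (real k + c)) *\<^sub>R (s' + c *\<^sub>R z) \<in> K" using Suc.IH[OF ts(2) Suc.prems(2,3) kc] .
    define u where "u = 1 / (real (Suc k) + c)"
    define v where "v = (real k + c) / (real (Suc k) + c)"
    have uv: "u \<ge> 0" "v \<ge> 0" "u + v = 1" using kc by (auto simp: u_def v_def field_simps)
    have "u *\<^sub>R t + v *\<^sub>R ((1 / (real k + c)) *\<^sub>R (s' + c *\<^sub>R z)) \<in> K"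
      using convexD[OF assms ts(1) w uv] .
    moreover have "u *\<^sub>R t + v *\<^sub>R ((1 / (real k + c)) *\<^sub>R (s' + c *\<^sub>R z)) =
        (1 / (real (Suc k) + c)) *\<^sub>R (s + c *\<^sub>R z)"
      using kc by (simp add: u_def v_def ts(3) scaleR_add_right)
    ultimately show ?thesis by simp
  qed
qed



lemma iter_quad:
  fixes \<phi> :: "nat \<Rightarrow> 'a::real_vector \<Rightarrow> real"
  assumes M: "prob_space M" and lin: "\<forall>j<m. linear (\<phi> j)"
    and i1: "\<forall>j<m. integrable M (\<phi> j)" and i2: "\<forall>j<m. integrable M (\<lambda>t. (\<phi> j t)\<^sup>2)"
  shows "\<forall>b. iter_int M k (\<lambda>s. \<alpha> + \<beta> * (\<Sum>j<m. (\<phi> j s + b j)\<^sup>2)) =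
     \<alpha> + \<beta> * (\<Sum>j<m. (real k * (\<integral>t. \<phi> j t \<partial>M) + b j)\<^sup>2
        + real k * ((\<integral>t. (\<phi> j t)\<^sup>2 \<partial>M) - (\<integral>t. \<phi> j t \<partial>M)\<^sup>2))"
proof (induction k)
  case 0
  then show ?case by (simp add: linear_0[OF lin[rule_format]])
next
  case (Suc k)
  interpret prob_space M by fact
  define mm where "mm j = (\<integral>t. \<phi> j t \<partial>M)" for j
  define qq where "qq j = (\<integral>t. (\<phi> j t)\<^sup>2 \<partial>M)" for j
  have sq: "(\<integral>t. \<phi> j t * \<phi> j t \<partial>M) = qq j" for j by (simp add: qq_def power2_eq_square)
  show ?case
  proof
    fix b :: "nat \<Rightarrow> real"
    have inner: "iter_int M k (\<lambda>s. \<alpha> + \<beta> * (\<Sum>j<m. (\<phi> j (t + s) + b j)\<^sup>2)) =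
       \<alpha> + \<beta> * (\<Sum>j<m. ((\<phi> j t)\<^sup>2 + 2 * (real k * mm j + b j) * \<phi> j t
          + ((real k * mm j + b j)\<^sup>2 + real k * (qq j - (mm j)\<^sup>2))))" for t
    proof -
      have "(\<lambda>s. \<alpha> + \<beta> * (\<Sum>j<m. (\<phi> j (t + s) + b j)\<^sup>2)) =
            (\<lambda>s. \<alpha> + \<beta> * (\<Sum>j<m. (\<phi> j s + (\<phi> j t + b j))\<^sup>2))"
        using lin by (intro ext arg_cong2[where f="(+)"] refl arg_cong2[where f="(*)"] sum.cong)
          (auto simp: linear_add algebra_simps)
      then have "iter_int M k (\<lambda>s. \<alpha> + \<beta> * (\<Sum>j<m. (\<phi> j (t + s) + b j)\<^sup>2)) =
          \<alpha> + \<beta> * (\<Sum>j<m. (real k * mm j + (\<phi> j t + b j))\<^sup>2 + real k * (qq j - (mm j)\<^sup>2))"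
        using Suc[rule_format, of "\<lambda>j. \<phi> j t + b j"] by (simp add: mm_def qq_def)
      also have "\<dots> = \<alpha> + \<beta> * (\<Sum>j<m. ((\<phi> j t)\<^sup>2 + 2 * (real k * mm j + b j) * \<phi> j t
          + ((real k * mm j + b j)\<^sup>2 + real k * (qq j - (mm j)\<^sup>2))))"
        by (intro arg_cong[where f="\<lambda>x. \<alpha> + \<beta> * x"] sum.cong refl)
          (simp add: power2_eq_square algebra_simps)
      finally show ?thesis .
    qed
    have ij: "integrable M (\<lambda>t. (\<phi> j t)\<^sup>2 + 2 * (real k * mm j + b j) * \<phi> j t
          + ((real k * mm j + b j)\<^sup>2 + real k * (qq j - (mm j)\<^sup>2)))" if "j < m" for j
      using i1 i2 that by auto
    have "iter_int M (Suc k) (\<lambda>s. \<alpha> + \<beta> * (\<Sum>j<m. (\<phi> j s + b j)\<^sup>2)) =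
       (\<integral>t. \<alpha> + \<beta> * (\<Sum>j<m. ((\<phi> j t)\<^sup>2 + 2 * (real k * mm j + b j) * \<phi> j t
          + ((real k * mm j + b j)\<^sup>2 + real k * (qq j - (mm j)\<^sup>2)))) \<partial>M)"
      by (simp add: inner)
    also have "\<dots> = \<alpha> + \<beta> * (\<Sum>j<m. (\<integral>t. ((\<phi> j t)\<^sup>2 + 2 * (real k * mm j + b j) * \<phi> j t
          + ((real k * mm j + b j)\<^sup>2 + real k * (qq j - (mm j)\<^sup>2))) \<partial>M))"
    proof -
      let ?S = "\<lambda>t. (\<Sum>j<m. ((\<phi> j t)\<^sup>2 + 2 * (real k * mm j + b j) * \<phi> j t
          + ((real k * mm j + b j)\<^sup>2 + real k * (qq j - (mm j)\<^sup>2))))"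
      have iS: "integrable M ?S" by (intro Bochner_Integration.integrable_sum) (use ij in blast)
      have "(\<integral>t. \<alpha> + \<beta> * ?S t \<partial>M) = (\<integral>t. \<alpha> \<partial>M) + (\<integral>t. \<beta> * ?S t \<partial>M)"
        using iS by (intro Bochner_Integration.integral_add) auto
      also have "\<dots> = \<alpha> + \<beta> * (\<integral>t. ?S t \<partial>M)" by (simp add: prob_space)
      also have "(\<integral>t. ?S t \<partial>M) = (\<Sum>j<m. (\<integral>t. ((\<phi> j t)\<^sup>2 + 2 * (real k * mm j + b j) * \<phi> j t
          + ((real k * mm j + b j)\<^sup>2 + real k * (qq j - (mm j)\<^sup>2))) \<partial>M))"
        using ij by (intro Bochner_Integration.integral_sum) auto
      finally show ?thesis .
    qed
    also have "\<dots> = \<alpha> + \<beta> * (\<Sum>j<m. (real (Suc k) * mm j + b j)\<^sup>2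
        + real (Suc k) * (qq j - (mm j)\<^sup>2))"
      using i1 i2 sq by (intro arg_cong[where f="\<lambda>x. \<alpha> + \<beta> * x"] sum.cong refl)
        (auto simp: mm_def[symmetric] prob_space power2_eq_square algebra_simps)
    finally show "iter_int M (Suc k) (\<lambda>s. \<alpha> + \<beta> * (\<Sum>j<m. (\<phi> j s + b j)\<^sup>2)) =
     \<alpha> + \<beta> * (\<Sum>j<m. (real (Suc k) * (\<integral>t. \<phi> j t \<partial>M) + b j)\<^sup>2
        + real (Suc k) * ((\<integral>t. (\<phi> j t)\<^sup>2 \<partial>M) - (\<integral>t. \<phi> j t \<partial>M)\<^sup>2))"
      by (simp add: mm_def qq_def)
  qed
qed



lemma mod_bound:
  fixes f :: "'a::lc_tvs \<Rightarrow> real" and \<phi> :: "nat \<Rightarrow> 'a \<Rightarrow> real"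
  assumes cK: "convex K" and lin: "\<forall>j<m. linear (\<phi> j)" and hK: "\<forall>j<m. \<forall>x\<in>K. h j x = \<phi> j x"
    and dp: "\<delta> > 0" and w: "\<forall>q\<in>Hset K h m \<delta>. \<bar>f (fst q) - f (snd q)\<bar> \<le> w"
    and p: "p \<in> K" and x: "x \<in> K"
  shows "\<bar>f p - f x\<bar> \<le> w * (1 + (\<Sum>j<m. (\<phi> j p - \<phi> j x)\<^sup>2) / \<delta>\<^sup>2)"
proof -
  define D where "D = (\<Sum>j<m. (\<phi> j p - \<phi> j x)\<^sup>2)"
  have D0: "D \<ge> 0" unfolding D_def by (intro sum_nonneg) auto
  have inH: "(u, v) \<in> Hset K h m \<delta>" if "u \<in> K" "v \<in> K" "(\<Sum>j<m. (\<phi> j u - \<phi> j v)\<^sup>2) \<le> \<delta>\<^sup>2" for u v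
  proof -
    have "(\<Sum>j<m. (h j u - h j v)\<^sup>2) = (\<Sum>j<m. (\<phi> j u - \<phi> j v)\<^sup>2)"
      using hK that by (intro sum.cong) auto
    then show ?thesis using that unfolding Hset_def by auto
  qed
  have "(x, x) \<in> Hset K h m \<delta>" using inH[OF x x] by simp
  then have w0: "w \<ge> 0" using w by fastforce
  show ?thesis
  proof (cases "D \<le> \<delta>\<^sup>2")
    case True
    then have "\<bar>f p - f x\<bar> \<le> w" using w inH[OF p x] unfolding D_def by fastforce
    also have "\<dots> \<le> w * (1 + D / \<delta>\<^sup>2)" using w0 D0 dp by (simp add: field_simps)
    finally show ?thesis by (simp add: D_def)
  next
    case False
    define d where "d = sqrt D"
    have dd: "d\<^sup>2 = D" using D0 by (simp add: d_def)
    have d0: "d \<ge> 0" using D0 by (simp add: d_def)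
    have gt: "d / \<delta> > 1"
    proof -
      have "\<delta>\<^sup>2 < d\<^sup>2" using False dd by simp
      then have "\<delta> < d" using d0 dp using power_less_imp_less_base by blast
      then show ?thesis using dp by simp
    qed
    define N where "N = nat \<lceil>d / \<delta>\<rceil>"
    have N1: "real N \<ge> d / \<delta>" "real N \<le> d / \<delta> + 1" unfolding N_def using gt by linarith+
    have Npos: "real N > 0" using N1 gt by linarith
    define q where "q i = (1 - real i / real N) *\<^sub>R x + (real i / real N) *\<^sub>R p" for i
    have qK: "q i \<in> K" if "i \<le> N" for i
    proof -
      have "real i / real N \<le> 1" using that Npos by (simp add: divide_le_eq_1)
      then show ?thesis unfolding q_def
        using convexD[OF cK x p, of "1 - real i / real N" "real i / real N"] by simp
    qed
    have phq: "\<phi> j (q i) = (1 - real i / real N) * \<phi> j x + (real i / real N) * \<phi> j p" if "j < m" for i j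
      using lin that by (simp add: q_def linear_add linear_cmul)
    have step: "\<bar>f (q (Suc i)) - f (q i)\<bar> \<le> w" if "i < N" for i
    proof -
      have "(\<Sum>j<m. (\<phi> j (q (Suc i)) - \<phi> j (q i))\<^sup>2) = (\<Sum>j<m. ((\<phi> j p - \<phi> j x) / real N)\<^sup>2)"
      proof (intro sum.cong refl)
        fix j assume "j \<in> {..<m}"
        then have "\<phi> j (q (Suc i)) - \<phi> j (q i) = (\<phi> j p - \<phi> j x) / real N"
          using Npos by (simp add: phq field_simps)
        then show "(\<phi> j (q (Suc i)) - \<phi> j (q i))\<^sup>2 = ((\<phi> j p - \<phi> j x) / real N)\<^sup>2" by simp
      qed
      also have "\<dots> = D / (real N)\<^sup>2" unfolding D_def
        by (simp add: power_divide sum_divide_distrib)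
      also have "\<dots> \<le> \<delta>\<^sup>2"
      proof -
        have "d \<le> real N * \<delta>" using N1 dp by (simp add: field_simps)
        then have "d\<^sup>2 \<le> (real N * \<delta>)\<^sup>2" using d0 by (intro power_mono) auto
        then show ?thesis using dd Npos by (simp add: field_simps power_mult_distrib)
      qed
      finally show ?thesis using w inH[OF qK qK, of "Suc i" i] that by fastforce
    qed
    have "q 0 = x" "q N = p" using Npos by (auto simp: q_def)
    then have "f p - f x = (\<Sum>i<N. f (q (Suc i)) - f (q i))"
      using sum_lessThan_telescope[of "\<lambda>i. f (q i)" N] by simp
    then have "\<bar>f p - f x\<bar> \<le> (\<Sum>i<N. \<bar>f (q (Suc i)) - f (q i)\<bar>)"
      by (simp add: sum_abs)
    also have "\<dots> \<le> (\<Sum>i<N. w)" using step by (intro sum_mono) auto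
    also have "\<dots> = real N * w" by simp
    also have "\<dots> \<le> (1 + d / \<delta>) * w" using N1 w0 by (intro mult_right_mono) auto
    also have "\<dots> \<le> (1 + D / \<delta>\<^sup>2) * w"
    proof -
      have "d / \<delta> * 1 \<le> d / \<delta> * (d / \<delta>)" using gt by (intro mult_left_mono) auto
      then have "d / \<delta> \<le> (d / \<delta>)\<^sup>2" by (simp only: power2_eq_square mult_1_right)
      then have "d / \<delta> \<le> D / \<delta>\<^sup>2" using dd by (simp add: power_divide)
      then show ?thesis using w0 by (intro mult_right_mono) auto
    qed
    finally show ?thesis by (simp add: D_def mult.commute)
  qed
qed



lemma main_pt:
  fixes K :: "'a::lc_tvs set" and f :: "'a \<Rightarrow> real" and \<Phi> :: "nat \<Rightarrow> 'a \<Rightarrow> real"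
  assumes cK: "convex K" and K: "compact K"
    and M: "prob_space M" "sets M = sets (restrict_space borel K)"
    and Mz: "prob_space Mz" "sets Mz = sets (restrict_space borel K)"
    and a: "0 \<le> a" and n: "1 \<le> n" and fc: "continuous_on K f"
    and lin: "\<forall>j<m. linear (\<Phi> j)" and cont: "\<forall>j<m. continuous_on UNIV (\<Phi> j)"
    and hK: "\<forall>j<m. \<forall>y\<in>K. h j y = \<Phi> j y"
    and mean: "\<forall>j<m. (\<integral>t. \<Phi> j t \<partial>M) = \<Phi> j x"
    and ss: "\<forall>y\<in>K. (\<Sum>j<m. (\<Phi> j y)\<^sup>2) \<le> 1"
    and w: "\<forall>q\<in>Hset K h m \<delta>. \<bar>f (fst q) - f (snd q)\<bar> \<le> w"
    and \<delta>: "\<delta> = sqrt ((4 * a\<^sup>2 + 1) / (real n + a))" and x: "x \<in> K"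
  shows "\<bar>(\<integral>z. iter_int M n (\<lambda>s. f ((1 / (real n + a)) *\<^sub>R (s + a *\<^sub>R z))) \<partial>Mz) - f x\<bar> \<le> 2 * w"
proof -
  have spM: "space M = K" using space_bp[OF M(2)] .
  have spMz: "space Mz = K" using space_bp[OF Mz(2)] .
  have na: "real n + a > 0" using n a by linarith
  have d2: "\<delta>\<^sup>2 = (4 * a\<^sup>2 + 1) / (real n + a)" using na by (simp add: \<delta>)
  have a41: "4 * a\<^sup>2 + 1 > 0" using zero_le_power2[of a] by linarith
  have dpos: "\<delta> > 0" using na a41 by (simp add: \<delta>)
  have "(x, x) \<in> Hset K h m \<delta>" using x unfolding Hset_def by simp
  then have w0: "w \<ge> 0" using w by fastforce
  have cK\<Phi>: "continuous_on S (\<Phi> j)" if "j < m" for j S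
    using cont that continuous_on_subset by blast
  define I where "I z = iter_int M n (\<lambda>s. f ((1 / (real n + a)) *\<^sub>R (s + a *\<^sub>R z)))" for z
  have affc: "continuous_on S (\<lambda>s. (1 / (real n + a)) *\<^sub>R (s + a *\<^sub>R z))" for S and z :: 'a
    by (intro scale_cont_on add_cont_on continuous_intros)
  have affK: "(1 / (real n + a)) *\<^sub>R (s + a *\<^sub>R z) \<in> K" if "s \<in> Ssum K n" "z \<in> K" for s z
    using Ssum_comb[OF cK that a na] .
  have iI: "integrable Mz I"
  proof -
    define g where "g v = f ((1 / (real n + a)) *\<^sub>R v)" for v
    define A where "A = (\<lambda>z. a *\<^sub>R z) ` K"
    have "continuous_on (msum A (Ssum K n)) g"
    proof -
      have "continuous_on (msum A (Ssum K n)) (\<lambda>v. (1 / (real n + a)) *\<^sub>R v)"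
        by (intro scale_cont_on continuous_intros)
      moreover have "(\<lambda>v. (1 / (real n + a)) *\<^sub>R v) ` msum A (Ssum K n) \<subseteq> K"
      proof
        fix u assume "u \<in> (\<lambda>v. (1 / (real n + a)) *\<^sub>R v) ` msum A (Ssum K n)"
        then obtain z s where "z \<in> K" "s \<in> Ssum K n" "u = (1 / (real n + a)) *\<^sub>R (a *\<^sub>R z + s)"
          unfolding msum_def A_def by auto
        then show "u \<in> K" using affK by (simp add: add.commute)
      qed
      ultimately show ?thesis unfolding g_def using continuous_on_compose2[OF fc] by blast
    qed
    then have c1: "continuous_on A (\<lambda>y. iter_int M n (\<lambda>s. g (y + s)))"
      using iter_cont[OF K M, of n] by blast
    have "continuous_on K (\<lambda>z. iter_int M n (\<lambda>s. g (a *\<^sub>R z + s)))"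
      using continuous_on_compose2[OF c1 scale_cont_on[OF continuous_on_id, of K a]]
      unfolding A_def by auto
    moreover have "(\<lambda>s. g (a *\<^sub>R z + s)) = (\<lambda>s. f ((1 / (real n + a)) *\<^sub>R (s + a *\<^sub>R z)))" for z
      by (simp add: g_def add.commute)
    ultimately have "continuous_on K I" unfolding I_def by simp
    then show ?thesis using cont_integrable[OF _ K Mz] by blast
  qed
  have i1: "\<forall>j<m. integrable M (\<Phi> j)" using cK\<Phi> cont_integrable[OF _ K M] by blast
  have i2: "\<forall>j<m. integrable M (\<lambda>t. (\<Phi> j t)\<^sup>2)"
  proof (intro allI impI)
    fix j assume "j < m"
    then have "continuous_on K (\<lambda>t. (\<Phi> j t)\<^sup>2)" using cK\<Phi> by (intro continuous_intros) auto
    then show "integrable M (\<lambda>t. (\<Phi> j t)\<^sup>2)" using cont_integrable[OF _ K M] by blast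
  qed
  define qq where "qq j = (\<integral>t. (\<Phi> j t)\<^sup>2 \<partial>M)" for j
  have sq: "(\<Sum>j<m. qq j) \<le> 1"
  proof -
    interpret prob_space M by fact
    have "(\<Sum>j<m. qq j) = (\<integral>t. (\<Sum>j<m. (\<Phi> j t)\<^sup>2) \<partial>M)"
      unfolding qq_def using i2 by (intro Bochner_Integration.integral_sum[symmetric]) auto
    also have "\<dots> \<le> (\<integral>t. 1 \<partial>M)"
      using i2 ss spM by (intro integral_mono Bochner_Integration.integrable_sum) auto
    finally show ?thesis by (simp add: prob_space)
  qed
  define \<beta> where "\<beta> = w / (\<delta>\<^sup>2 * (real n + a)\<^sup>2)"
  have b0: "\<beta> \<ge> 0" unfolding \<beta>_def using w0 by simp
  have pt: "\<bar>I z - f x\<bar> \<le> 2 * w" if z: "z \<in> K" for z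
  proof -
    define b where "b j = a * \<Phi> j z - (real n + a) * \<Phi> j x" for j
    define F where "F s = f ((1 / (real n + a)) *\<^sub>R (s + a *\<^sub>R z))" for s
    define G where "G s = w + \<beta> * (\<Sum>j<m. (\<Phi> j s + b j)\<^sup>2)" for s
    have Fc: "continuous_on (Ssum K n) F"
      unfolding F_def using continuous_on_compose2[OF fc affc] affK z by blast
    have Gc: "continuous_on (Ssum K n) G"
      unfolding G_def using cK\<Phi> by (intro continuous_intros) auto
    have FG: "\<forall>s\<in>Ssum K n. \<bar>F s - f x\<bar> \<le> G s"
    proof
      fix s assume s: "s \<in> Ssum K n"
      define y where "y = (1 / (real n + a)) *\<^sub>R (s + a *\<^sub>R z)"
      have yK: "y \<in> K" using affK[OF s z] by (simp add: y_def)
      have "\<bar>f y - f x\<bar> \<le> w * (1 + (\<Sum>j<m. (\<Phi> j y - \<Phi> j x)\<^sup>2) / \<delta>\<^sup>2)"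
        using mod_bound[OF cK lin hK dpos w yK x] .
      also have "(\<Sum>j<m. (\<Phi> j y - \<Phi> j x)\<^sup>2) = (\<Sum>j<m. (\<Phi> j s + b j)\<^sup>2) / (real n + a)\<^sup>2"
        unfolding sum_divide_distrib
      proof (intro sum.cong refl)
        fix j assume "j \<in> {..<m}"
        then have "\<Phi> j y = (\<Phi> j s + a * \<Phi> j z) / (real n + a)"
          using lin by (simp add: y_def linear_add linear_cmul add_divide_distrib)
        then have "\<Phi> j y - \<Phi> j x = (\<Phi> j s + b j) / (real n + a)"
          using na by (simp add: b_def diff_divide_distrib add_divide_distrib)
        then show "(\<Phi> j y - \<Phi> j x)\<^sup>2 = (\<Phi> j s + b j)\<^sup>2 / (real n + a)\<^sup>2"
          by (simp add: power_divide)
      qed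
      also have "w * (1 + (\<Sum>j<m. (\<Phi> j s + b j)\<^sup>2) / (real n + a)\<^sup>2 / \<delta>\<^sup>2) = G s"
        unfolding G_def \<beta>_def using dpos na by (simp add: field_simps)
      finally show "\<bar>F s - f x\<bar> \<le> G s" by (simp add: F_def y_def)
    qed
    have "\<bar>I z - f x\<bar> \<le> iter_int M n G"
      using iter_mono[OF K M, of n "f x"] Fc Gc FG unfolding I_def F_def by blast
    also have "iter_int M n G = w + \<beta> * (\<Sum>j<m. (real n * \<Phi> j x + b j)\<^sup>2
        + real n * (qq j - (\<Phi> j x)\<^sup>2))"
    proof -
      have "iter_int M n G = w + \<beta> * (\<Sum>j<m. (real n * (\<integral>t. \<Phi> j t \<partial>M) + b j)\<^sup>2
        + real n * ((\<integral>t. (\<Phi> j t)\<^sup>2 \<partial>M) - (\<integral>t. \<Phi> j t \<partial>M)\<^sup>2))"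
        unfolding G_def using iter_quad[OF M(1) lin i1 i2, of n w \<beta>] by blast
      also have "\<dots> = w + \<beta> * (\<Sum>j<m. (real n * \<Phi> j x + b j)\<^sup>2
        + real n * (qq j - (\<Phi> j x)\<^sup>2))"
        using mean by (intro arg_cong[where f="\<lambda>t. w + \<beta> * t"] sum.cong refl) (auto simp: qq_def)
      finally show ?thesis .
    qed
    also have "\<dots> \<le> w + \<beta> * (4 * a\<^sup>2 + real n)"
    proof -
      have e1: "(\<Sum>j<m. (real n * \<Phi> j x + b j)\<^sup>2) \<le> 4 * a\<^sup>2"
      proof -
        have "(\<Sum>j<m. (real n * \<Phi> j x + b j)\<^sup>2) = a\<^sup>2 * (\<Sum>j<m. (\<Phi> j z - \<Phi> j x)\<^sup>2)"
          unfolding sum_distrib_left by (intro sum.cong refl) (simp add: b_def power2_eq_square algebra_simps)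
        also have "(\<Sum>j<m. (\<Phi> j z - \<Phi> j x)\<^sup>2) \<le> (\<Sum>j<m. 2 * (\<Phi> j z)\<^sup>2 + 2 * (\<Phi> j x)\<^sup>2)"
        proof (intro sum_mono)
          fix j
          have "0 \<le> (\<Phi> j z + \<Phi> j x)\<^sup>2" by simp
          then show "(\<Phi> j z - \<Phi> j x)\<^sup>2 \<le> 2 * (\<Phi> j z)\<^sup>2 + 2 * (\<Phi> j x)\<^sup>2"
            by (simp add: power2_eq_square algebra_simps)
        qed
        also have "\<dots> = 2 * (\<Sum>j<m. (\<Phi> j z)\<^sup>2) + 2 * (\<Sum>j<m. (\<Phi> j x)\<^sup>2)"
          by (simp add: sum.distrib sum_distrib_left)
        also have "\<dots> \<le> 4"
        proof -
          have "(\<Sum>j<m. (\<Phi> j z)\<^sup>2) \<le> 1" "(\<Sum>j<m. (\<Phi> j x)\<^sup>2) \<le> 1" using ss z x by auto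
          then show ?thesis by linarith
        qed
        finally show ?thesis by (simp add: mult_left_mono)
      qed
      have e2: "(\<Sum>j<m. real n * (qq j - (\<Phi> j x)\<^sup>2)) \<le> real n"
      proof -
        have "(\<Sum>j<m. real n * (qq j - (\<Phi> j x)\<^sup>2)) \<le> (\<Sum>j<m. real n * qq j)"
          by (intro sum_mono mult_left_mono) auto
        also have "\<dots> = real n * (\<Sum>j<m. qq j)" by (simp add: sum_distrib_left)
        also have "\<dots> \<le> real n" using sq by (simp add: mult_left_le)
        finally show ?thesis .
      qed
      have "(\<Sum>j<m. (real n * \<Phi> j x + b j)\<^sup>2 + real n * (qq j - (\<Phi> j x)\<^sup>2))
          = (\<Sum>j<m. (real n * \<Phi> j x + b j)\<^sup>2) + (\<Sum>j<m. real n * (qq j - (\<Phi> j x)\<^sup>2))"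
        by (rule sum.distrib)
      also have "\<dots> \<le> 4 * a\<^sup>2 + real n" using e1 e2 by linarith
      finally have "\<beta> * (\<Sum>j<m. (real n * \<Phi> j x + b j)\<^sup>2 + real n * (qq j - (\<Phi> j x)\<^sup>2))
          \<le> \<beta> * (4 * a\<^sup>2 + real n)" using b0 by (rule mult_left_mono)
      then show ?thesis by linarith
    qed
    also have "\<dots> \<le> 2 * w"
    proof -
      have "4 * a\<^sup>2 + real n \<le> (4 * a\<^sup>2 + 1) * (real n + a)"
      proof -
        have "4 * a\<^sup>2 * 1 \<le> 4 * a\<^sup>2 * real n" using n by (intro mult_left_mono) auto
        moreover have "0 \<le> 4 * a\<^sup>2 * a" using a by simp
        moreover have "(4 * a\<^sup>2 + 1) * (real n + a) = 4 * a\<^sup>2 * real n + 4 * a\<^sup>2 * a + real n + a"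
          by (simp add: algebra_simps)
        ultimately show ?thesis using a by linarith
      qed
      moreover have "\<delta>\<^sup>2 * (real n + a)\<^sup>2 = (4 * a\<^sup>2 + 1) * (real n + a)"
        using na unfolding d2 power2_eq_square[of "real n + a"] by simp
      ultimately have "4 * a\<^sup>2 + real n \<le> \<delta>\<^sup>2 * (real n + a)\<^sup>2" by simp
      then have "\<beta> * (4 * a\<^sup>2 + real n) \<le> \<beta> * (\<delta>\<^sup>2 * (real n + a)\<^sup>2)" using b0 by (rule mult_left_mono)
      also have "\<dots> = w" unfolding \<beta>_def using dpos na by simp
      finally show ?thesis by simp
    qed
    finally show ?thesis .
  qed
  interpret Pz: prob_space Mz by fact
  have iD: "integrable Mz (\<lambda>z. I z - f x)" using iI by simp
  have "\<bar>\<integral>z. I z - f x \<partial>Mz\<bar> \<le> 2 * w"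
    using pt iD spMz by (intro abs_int_le[OF Mz(1)]) auto
  moreover have "(\<integral>z. I z - f x \<partial>Mz) = (\<integral>z. I z \<partial>Mz) - f x"
    using iI by (simp add: Pz.prob_space)
  ultimately show ?thesis by (simp add: I_def)
qed



lemma half1: "(S::ereal) \<le> 2 * x \<Longrightarrow> S / 2 \<le> x"
  by (cases S; cases x) (auto simp: field_simps)
lemma half2: "2 * ((S::ereal) / 2) = S"
  by (cases S) auto
lemma twoINF: "(\<And>i. i \<in> I \<Longrightarrow> (S::ereal) \<le> 2 * g i) \<Longrightarrow> S \<le> 2 * (INF i\<in>I. g i)"
proof -
  assume h: "\<And>i. i \<in> I \<Longrightarrow> (S::ereal) \<le> 2 * g i"
  have "S / 2 \<le> (INF i\<in>I. g i)" using h half1 by (intro INF_greatest) auto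
  then have "2 * (S / 2) \<le> 2 * (INF i\<in>I. g i)" by (intro ereal_mult_left_mono) auto
  then show ?thesis by (metis half2)
qed

theorem proposition3p3:
  fixes K :: "'a::lc_tvs set"
    and T :: "('a \<Rightarrow> real) \<Rightarrow> ('a \<Rightarrow> real)"
    and muT :: "'a \<Rightarrow> 'a measure"
    and a :: real
    and mu :: "nat \<Rightarrow> 'a measure"
    and n :: nat
    and f :: "'a \<Rightarrow> real"
  assumes "convex K" and "compact K"
    and "markov_operator K T"
    and "\<forall>h. affine_cont K h \<longrightarrow> (\<forall>x\<in>K. T h x = h x)"
    and "\<forall>x\<in>K. borel_prob_on K (muT x)"
    and "\<forall>x\<in>K. \<forall>g. continuous_on K g \<longrightarrow> (\<integral>y. g y \<partial>(muT x)) = T g x"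
    and "0 \<le> a"
    and "\<forall>k\<ge>1. borel_prob_on K (mu k)"
    and "1 \<le> n"
    and "continuous_on K f"
  shows "sup_norm_on K (\<lambda>x. Cop muT (mu n) a n f x - f x)
           \<le> 2 * Omega K f (sqrt ((4 * a\<^sup>2 + 1) / (real n + a)))"
proof -
  note cK = assms(1) and K = assms(2) and aff = assms(4) and bpT = assms(5) and repT = assms(6)
    and a = assms(7) and bpm = assms(8) and n = assms(9) and fc = assms(10)
  define \<delta> where "\<delta> = sqrt ((4 * a\<^sup>2 + 1) / (real n + a))"
  have Mz: "prob_space (mu n)" "sets (mu n) = sets (restrict_space borel K)"
    using bpm n unfolding borel_prob_on_def by auto
  show ?thesis
  proof (cases "K = {}")
    case True
    then show ?thesis by (simp add: sup_norm_on_def)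
  next
    case False
    then obtain x0 where x0: "x0 \<in> K" by blast
    show ?thesis unfolding Omega_def \<delta>_def[symmetric]
    proof (rule twoINF)
      fix mh :: "nat \<times> (nat \<Rightarrow> 'a \<Rightarrow> real)" assume "mh \<in> {(m, h). 1 \<le> m \<and> (\<forall>j<m. h j \<in> Lfun K) \<and>
                       sup_norm_on K (\<lambda>x. \<Sum>j<m. (h j x)\<^sup>2) = 1}"
      then obtain m h where mh: "mh = (m, h)" and hL: "\<forall>j<m. h j \<in> Lfun K"
        and hn: "sup_norm_on K (\<lambda>x. \<Sum>j<m. (h j x)\<^sup>2) = 1" by blast
      show "sup_norm_on K (\<lambda>x. Cop muT (mu n) a n f x - f x) \<le> 2 * omega_mod K f (snd mh) (fst mh) \<delta>"
      proof (cases "omega_mod K f h m \<delta> = \<infinity>")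
        case True
        then show ?thesis by (simp add: mh)
      next
        case False
        have "(x0, x0) \<in> Hset K h m \<delta>" using x0 unfolding Hset_def by simp
        then have "ereal \<bar>f x0 - f x0\<bar> \<le> omega_mod K f h m \<delta>"
          unfolding omega_mod_def by (metis (no_types, lifting) SUP_upper fst_conv snd_conv)
        then have "omega_mod K f h m \<delta> \<noteq> -\<infinity>" by auto
        with False obtain w where wdef: "omega_mod K f h m \<delta> = ereal w" by (cases "omega_mod K f h m \<delta>") auto
        have w: "\<forall>q\<in>Hset K h m \<delta>. \<bar>f (fst q) - f (snd q)\<bar> \<le> w"
        proof
          fix q assume "q \<in> Hset K h m \<delta>"
          then have "ereal \<bar>f (fst q) - f (snd q)\<bar> \<le> omega_mod K f h m \<delta>"
            unfolding omega_mod_def by (rule SUP_upper)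
          then show "\<bar>f (fst q) - f (snd q)\<bar> \<le> w" using wdef by simp
        qed
        have "\<forall>j. \<exists>\<phi>. j < m \<longrightarrow> \<phi> \<in> dual_space \<and> (\<forall>x\<in>K. h j x = \<phi> x)"
          using hL unfolding Lfun_def by blast
        then obtain \<Phi> where \<Phi>: "\<forall>j<m. \<Phi> j \<in> dual_space \<and> (\<forall>x\<in>K. h j x = \<Phi> j x)"
          by metis
        have lin: "\<forall>j<m. linear (\<Phi> j)" and cont: "\<forall>j<m. continuous_on UNIV (\<Phi> j)"
          and hK: "\<forall>j<m. \<forall>y\<in>K. h j y = \<Phi> j y"
          using \<Phi> unfolding dual_space_def by auto
        have ss: "\<forall>y\<in>K. (\<Sum>j<m. (\<Phi> j y)\<^sup>2) \<le> 1"
        proof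
          fix y assume y: "y \<in> K"
          have "ereal \<bar>\<Sum>j<m. (h j y)\<^sup>2\<bar> \<le> 1"
            using hn SUP_upper[OF y, of "\<lambda>x. ereal \<bar>\<Sum>j<m. (h j x)\<^sup>2\<bar>"] unfolding sup_norm_on_def
            by simp
          moreover have "(\<Sum>j<m. (h j y)\<^sup>2) = (\<Sum>j<m. (\<Phi> j y)\<^sup>2)" using hK y by (intro sum.cong) auto
          ultimately show "(\<Sum>j<m. (\<Phi> j y)\<^sup>2) \<le> 1" by simp
        qed
        have pt: "\<bar>Cop muT (mu n) a n f x - f x\<bar> \<le> 2 * w" if x: "x \<in> K" for x
        proof -
          have M: "prob_space (muT x)" "sets (muT x) = sets (restrict_space borel K)"
            using bpT x unfolding borel_prob_on_def by auto
          have mean: "\<forall>j<m. (\<integral>t. \<Phi> j t \<partial>(muT x)) = \<Phi> j x"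
          proof (intro allI impI)
            fix j assume j: "j < m"
            have cj: "continuous_on K (\<Phi> j)" using cont j continuous_on_subset by blast
            have "affine_cont K (\<Phi> j)"
              unfolding affine_cont_def using cj lin j by (simp add: linear_add linear_cmul)
            then have "T (\<Phi> j) x = \<Phi> j x" using aff x by blast
            moreover have "(\<integral>t. \<Phi> j t \<partial>(muT x)) = T (\<Phi> j) x" using repT x cj by blast
            ultimately show "(\<integral>t. \<Phi> j t \<partial>(muT x)) = \<Phi> j x" by simp
          qed
          show ?thesis unfolding Cop_def
            using main_pt[OF cK K M Mz a n fc lin cont hK mean ss w \<delta>_def x] .
        qed
        show ?thesis unfolding mh sup_norm_on_def
        proof (simp add: wdef, intro SUP_least)
          fix x assume "x \<in> K"
          then show "ereal \<bar>Cop muT (mu n) a n f x - f x\<bar> \<le> ereal (2 * w)" using pt by simp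
        qed
      qed
    qed
  qed
qed

end
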